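(* Let $n\ge1$, $\bar M_0=\{u\in\mathbb{C}^{n+2}\mid u_1\cdots u_{n+2}=1,\ u_1+\cdots+u_{n+2}=0\}$, and $\varpi:\bar M_0\to\mathbb{C}^\times$, $\varpi(u)=u_1$. The critical values of $\varpi$ are exactly the $n+2$ solutions $u_1$ of the equation $$u_1^{n+2}=(-1)^{n+1}(n+1)^{n+1}.$$ *)

theory Defs
  imports Complex_Main
begin

(* Points of C^(n+2) are encoded as functions u :: nat => complex with support in {0..n+1};
   coordinate u_k of the paper is u (k-1). *)

definition M0 :: "nat \<Rightarrow> (nat \<Rightarrow> complex) set" where
  "M0 n = {u. (\<forall>i>n+1. u i = 0) \<and> (\<Prod>i\<le>n+1. u i) = 1 \<and> (\<Sum>i\<le>n+1. u i) = 0}"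

(* Tangent space of M0 at u: kernel of the differential of the defining equations
   (u_1 ... u_{n+2} - 1, u_1 + ... + u_{n+2}); the derivative of the product is written out. *)
definition tangent_M0 :: "nat \<Rightarrow> (nat \<Rightarrow> complex) \<Rightarrow> (nat \<Rightarrow> complex) set" where
  "tangent_M0 n u = {v. (\<forall>i>n+1. v i = 0)
      \<and> (\<Sum>i\<le>n+1. v i * (\<Prod>j\<in>{..n+1}-{i}. u j)) = 0
      \<and> (\<Sum>i\<le>n+1. v i) = 0}"

(* varpi(u) = u_1; its differential is v |-> v_1.  u is a critical point iff the
   differential vanishes on the tangent space. *)
definition critical_point_varpi :: "nat \<Rightarrow> (nat \<Rightarrow> complex) \<Rightarrow> bool" where
  "critical_point_varpi n u \<longleftrightarrow> u \<in> M0 n \<and> (\<forall>v\<in>tangent_M0 n u. v 0 = 0)"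

definition critical_values_varpi :: "nat \<Rightarrow> complex set" where
  "critical_values_varpi n = {u 0 | u. critical_point_varpi n u}"

end

theory Submission
  imports Defs
begin

lemma M0_nz:
  assumes "u \<in> M0 n" "k \<le> n+1"
  shows "u k \<noteq> 0"
proof
  assume "u k = 0"
  hence "(\<Prod>i\<le>n+1. u i) = 0" using assms(2) by (intro prod_zero) auto
  moreover have "(\<Prod>i\<le>n+1. u i) = 1" using assms(1) unfolding M0_def by blast
  ultimately show False by (metis zero_neq_one)
qed

lemma M0_prod_rem:
  assumes "u \<in> M0 n" "k \<le> n+1"
  shows "(\<Prod>j\<in>{..n+1}-{k}. u j) = 1 / u k"
proof -
  have "(\<Prod>i\<le>n+1. u i) = u k * (\<Prod>j\<in>{..n+1}-{k}. u j)"
    using assms(2) by (intro prod.remove) auto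
  hence "u k * (\<Prod>j\<in>{..n+1}-{k}. u j) = 1" using assms(1) by (simp add: M0_def)
  thus ?thesis using M0_nz[OF assms] by (simp add: field_simps)
qed

lemma tangent_iff:
  assumes "u \<in> M0 n"
  shows "v \<in> tangent_M0 n u \<longleftrightarrow> (\<forall>i>n+1. v i = 0) \<and> (\<Sum>i\<le>n+1. v i / u i) = 0
           \<and> (\<Sum>i\<le>n+1. v i) = 0"
proof -
  have "(\<Sum>i\<le>n+1. v i * (\<Prod>j\<in>{..n+1}-{i}. u j)) = (\<Sum>i\<le>n+1. v i / u i)"
    using M0_prod_rem[OF assms] by (intro sum.cong) auto
  thus ?thesis unfolding tangent_M0_def by auto
qed

lemma sum3:
  fixes f :: "nat \<Rightarrow> complex"
  assumes "i \<le> n+1" "i \<noteq> 0" "i \<noteq> 1" "\<And>k. k \<notin> {0,1,i} \<Longrightarrow> f k = 0"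
  shows "(\<Sum>k\<le>n+1. f k) = f 0 + f 1 + f i"
proof -
  have "(\<Sum>k\<le>n+1. f k) = (\<Sum>k\<in>{0,1,i}. f k)"
    using assms by (intro sum.mono_neutral_right) auto
  thus ?thesis using assms by simp
qed

lemma crit_const:
  assumes "critical_point_varpi n u" "1 \<le> i" "i \<le> n+1"
  shows "u i = u 1"
proof (rule ccontr)
  assume ne: "u i \<noteq> u 1"
  have M: "u \<in> M0 n" using assms(1) by (simp add: critical_point_varpi_def)
  have i0: "i \<noteq> 0" "i \<noteq> 1" using assms ne by auto
  have i1: "i \<noteq> Suc 0" "Suc 0 \<noteq> i" using i0 by simp_all
  have nz0: "u 0 \<noteq> 0" and nz1: "u 1 \<noteq> 0" and nzi: "u i \<noteq> 0"
    using M0_nz[OF M] assms by auto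
  have d: "1 / u i - 1 / u 1 \<noteq> 0" using ne nzi nz1 by (simp add: field_simps)
  define a where "a = (1 / u 1 - 1 / u 0) / (1 / u i - 1 / u 1)"
  define v where "v = (\<lambda>k. if k = 0 then 1 else if k = i then a else if k = 1 then -1 - a else (0::complex))"
  have s1: "(\<Sum>k\<le>n+1. v k) = 0"
    by (subst sum3[OF assms(3) i0]) (simp_all add: v_def i0 i1)
  have s2: "(\<Sum>k\<le>n+1. v k / u k) = 0"
  proof -
    have "(\<Sum>k\<le>n+1. v k / u k) = v 0 / u 0 + v 1 / u 1 + v i / u i"
      by (rule sum3[OF assms(3) i0]) (simp add: v_def)
    also have "\<dots> = 1 / u 0 + (-1 - a) / u 1 + a / u i" using i0 i1 by (simp add: v_def)
    also have "\<dots> = 1 / u 0 - 1 / u 1 + a * (1 / u i - 1 / u 1)" using nz0 nz1 nzi by (simp add: field_simps)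
    also have "a * (1 / u i - 1 / u 1) = 1 / u 1 - 1 / u 0" using d unfolding a_def by simp
    also have "1 / u 0 - 1 / u 1 + (1 / u 1 - 1 / u 0) = (0::complex)" by simp
    finally show ?thesis .
  qed
  have "v \<in> tangent_M0 n u"
    unfolding tangent_iff[OF M] using s1 s2 assms(3) by (auto simp: v_def)
  hence "v 0 = 0" using assms(1) by (simp add: critical_point_varpi_def)
  thus False by (simp add: v_def)
qed

lemma pw: "(- x * c) ^ k = (-1) ^ k * x ^ k * (c::complex) ^ k"
proof -
  have "- x * c = (-1) * x * c" by simp
  thus ?thesis by (simp only: power_mult_distrib)
qed

lemma ng: "(u0::complex) + x * c = 0 \<Longrightarrow> u0 = - x * c"
  by (simp add: eq_neg_iff_add_eq_0)

lemma crit_eq: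
  assumes "critical_point_varpi n u"
  shows "u 0 ^ (n+2) = (-1) ^ (n+1) * (of_nat (n+1)) ^ (n+1)"
proof -
  have M: "u \<in> M0 n" using assms(1) by (simp add: critical_point_varpi_def)
  have S0: "(\<Sum>i\<le>n+1. u i) = 0" using M unfolding M0_def by blast
  have P0: "(\<Prod>i\<le>n+1. u i) = 1" using M unfolding M0_def by blast
  define c where "c = u 1"
  have cc: "u (Suc i) = c" if "i \<le> n" for i unfolding c_def
    using crit_const[OF assms, of "Suc i"] that by simp
  have "(\<Sum>i\<le>Suc n. u i) = u 0 + (\<Sum>i\<le>n. u (Suc i))" by (rule sum.atMost_Suc_shift)
  also have "(\<Sum>i\<le>n. u (Suc i)) = (\<Sum>i\<le>n. c)" using cc by (intro sum.cong) auto
  finally have S: "u 0 + of_nat (n+1) * c = 0" using S0 by simp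
  have "(\<Prod>i\<le>Suc n. u i) = u 0 * (\<Prod>i\<le>n. u (Suc i))" by (rule prod.atMost_Suc_shift)
  also have "(\<Prod>i\<le>n. u (Suc i)) = (\<Prod>i\<le>n. c)" using cc by (intro prod.cong) auto
  finally have P: "u 0 * c ^ (n+1) = 1" using P0 by simp
  define N :: complex where "N = of_nat (n+1)"
  define K where "K = (-1) ^ (n+1) * N ^ (n+1)"
  have e: "u 0 = - N * c" unfolding N_def by (rule ng[OF S])
  have e2: "u 0 ^ (n+1) = K * c ^ (n+1)" unfolding K_def by (subst e) (rule pw)
  have "u 0 ^ (n+2) = u 0 * u 0 ^ (n+1)" by simp
  also have "\<dots> = K * (u 0 * c ^ (n+1))" using e2 by (simp only: mult_ac)
  also have "\<dots> = K" using P by simp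
  finally show ?thesis unfolding K_def N_def .
qed

lemma crit_exists:
  assumes "w ^ (n+2) = (-1) ^ (n+1) * (of_nat (n+1)::complex) ^ (n+1)"
  shows "\<exists>u. critical_point_varpi n u \<and> u 0 = w"
proof -
  define N :: complex where "N = of_nat (n+1)"
  define K where "K = (-1) ^ (n+1) * N ^ (n+1)"
  have Nnz: "N \<noteq> 0" unfolding N_def by (metis of_nat_eq_0_iff Suc_eq_plus1 nat.distinct(1))
  have N1: "1 + N \<noteq> 0"
  proof -
    have "1 + N = of_nat (n+2)" unfolding N_def by simp
    thus ?thesis by (metis of_nat_eq_0_iff add_eq_0_iff_both_eq_0 zero_neq_numeral)
  qed
  have Knz: "K \<noteq> 0" unfolding K_def using Nnz by simp
  have wK: "w ^ (n+2) = K" using assms unfolding K_def N_def .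
  have wnz: "w \<noteq> 0" using wK Knz by auto
  define c where "c = - w / N"
  have cnz: "c \<noteq> 0" using wnz Nnz by (simp add: c_def)
  have wc: "w = - N * c" using Nnz by (simp add: c_def)
  have wnc: "w \<noteq> c"
  proof
    assume "w = c"
    hence "c = - N * c" using wc by simp
    hence "(1 + N) * c = 0" by (metis add.commute distrib_right eq_neg_iff_add_eq_0 minus_mult_left mult_1)
    thus False using cnz N1 by simp
  qed
  define u where "u = (\<lambda>i. if i = 0 then w else if i \<le> n+1 then c else 0)"
  have cc: "\<And>i. u (Suc i) = (if i \<le> n then c else 0)" by (simp add: u_def)
  have Sm: "(\<Sum>i\<le>n+1. u i) = 0"
  proof -
    have "(\<Sum>i\<le>Suc n. u i) = u 0 + (\<Sum>i\<le>n. u (Suc i))" by (rule sum.atMost_Suc_shift)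
    also have "(\<Sum>i\<le>n. u (Suc i)) = (\<Sum>i\<le>n. c)" using cc by (intro sum.cong) auto
    also have "(\<Sum>i\<le>n. c) = N * c" by (simp add: N_def)
    finally show ?thesis using wc by (simp add: u_def)
  qed
  have Pr: "(\<Prod>i\<le>n+1. u i) = 1"
  proof -
    have "(\<Prod>i\<le>Suc n. u i) = u 0 * (\<Prod>i\<le>n. u (Suc i))" by (rule prod.atMost_Suc_shift)
    also have "(\<Prod>i\<le>n. u (Suc i)) = (\<Prod>i\<le>n. c)" using cc by (intro prod.cong) auto
    finally have e: "(\<Prod>i\<le>n+1. u i) = w * c ^ (n+1)" by (simp add: u_def)
    have k1: "w ^ (n+1) = K * c ^ (n+1)" unfolding K_def by (subst wc) (rule pw)
    have "(w * c ^ (n+1)) * K = w * (K * c ^ (n+1))" by (simp only: mult_ac)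
    also have "\<dots> = w * w ^ (n+1)" using k1 by simp
    also have "\<dots> = w ^ (n+2)" by simp
    also have "\<dots> = K" by (rule wK)
    finally have "w * c ^ (n+1) = 1" using Knz by simp
    thus ?thesis using e by simp
  qed
  have M: "u \<in> M0 n" unfolding M0_def using Sm Pr by (auto simp: u_def)
  have crit: "\<forall>v\<in>tangent_M0 n u. v 0 = 0"
  proof
    fix v assume "v \<in> tangent_M0 n u"
    hence t1: "(\<Sum>i\<le>n+1. v i / u i) = 0" and t2: "(\<Sum>i\<le>n+1. v i) = 0"
      using tangent_iff[OF M] by auto
    have "(\<Sum>i\<le>Suc n. v i / u i) = v 0 / u 0 + (\<Sum>i\<le>n. v (Suc i) / u (Suc i))"
      by (rule sum.atMost_Suc_shift)
    also have "(\<Sum>i\<le>n. v (Suc i) / u (Suc i)) = (\<Sum>i\<le>n. v (Suc i) / c)"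
      using cc by (intro sum.cong) auto
    also have "\<dots> = (\<Sum>i\<le>n. v (Suc i)) / c" by (simp add: sum_divide_distrib)
    finally have A: "v 0 / w + (\<Sum>i\<le>n. v (Suc i)) / c = 0" using t1 by (simp add: u_def)
    have B: "v 0 + (\<Sum>i\<le>n. v (Suc i)) = 0" using t2 sum.atMost_Suc_shift[of v n] by simp
    hence "(\<Sum>i\<le>n. v (Suc i)) = - v 0" by (simp add: eq_neg_iff_add_eq_0 add.commute)
    with A have "v 0 * (1 / w - 1 / c) = 0" by (simp add: field_simps)
    moreover have "1 / w - 1 / c \<noteq> 0" using wnc wnz cnz by (simp add: field_simps)
    ultimately show "v 0 = 0" by simp
  qed
  show ?thesis using M crit by (intro exI[of _ u]) (simp add: critical_point_varpi_def u_def)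
qed

theorem mainTheorem9:
  fixes n :: nat
  assumes "n \<ge> 1"
  shows "critical_values_varpi n =
           {w :: complex. w ^ (n+2) = (-1) ^ (n+1) * (of_nat (n+1)) ^ (n+1)}
         \<and> card (critical_values_varpi n) = n + 2"
proof -
  have eq: "critical_values_varpi n =
           {w :: complex. w ^ (n+2) = (-1) ^ (n+1) * (of_nat (n+1)) ^ (n+1)}"
    unfolding critical_values_varpi_def using crit_eq crit_exists by fastforce
  have "(-1) ^ (n+1) * (of_nat (n+1)::complex) ^ (n+1) \<noteq> 0" by (simp del: of_nat_Suc)
  hence "card {w :: complex. w ^ (n+2) = (-1) ^ (n+1) * (of_nat (n+1)) ^ (n+1)} = n+2"
    by (intro card_nth_roots) auto
  with eq show ?thesis by simp
qed

end
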